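(* Let $q=2^r$ ($r$ a positive integer), $N=q(q^2-1)$, and let $\{C_i\}_{i=0}^N$ be the weight distribution of the code $C(SL(2,q))$. Then for $0\le i\le N$, \[ C_i=\sum\binom{q^2}{\nu_0}\prod_{tr(\beta^{-1})=0}\binom{q^2+q}{\nu_\beta}\prod_{tr(\beta^{-1})=1}\binom{q^2-q}{\nu_\beta}, \] where the sum runs over all families of nonnegative integers $\{\nu_\beta\}_{\beta\in\mathbb{F}_q}$ with $\sum_\beta\nu_\beta=i$ and $\sum_\beta\nu_\beta\beta=0$ in $\mathbb{F}_q$, and the first and second products run over $\beta\in\mathbb{F}_q^*$ with $tr(\beta^{-1})=0$, respectively $tr(\beta^{-1})=1$.
   Context: $tr:\mathbb{F}_q\to\mathbb{F}_2$ is the absolute trace. $Tr$ is the matrix trace; for a fixed ordering $g_1,\dots,g_N$ of $SL(2,q)$ and $v=(Tr(g_1),\dots,Tr(g_N))\in\mathbb{F}_q^N$, $C(SL(2,q))=\{u\in\mathbb{F}_2^N:u\cdot v=0\}$ (dot product in $\mathbb{F}_q$). $C_i$ is the number of codewords of Hamming weight $i$. Convention: $\binom{b}{a}=0$ if $b<a$. *)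

theory Defs
  imports "HOL-Analysis.Analysis"
begin

text \<open>Absolute trace F_q -> F_2 for q = 2^r, with values in the prime subfield {0,1} of F_q.\<close>
definition abs_tr :: "nat \<Rightarrow> 'a::field \<Rightarrow> 'a" where
  "abs_tr r x = (\<Sum>j<r. x ^ (2 ^ j))"

definition SL2 :: "('a::field ^ 2 ^ 2) set" where
  "SL2 = {A. det A = 1}"

text \<open>The binary code C(SL(2,q)) w.r.t. an ordering g of SL(2,q) (indices 0..N-1);
  codewords are 0/1-vectors u (zero outside the index range), and u \<cdot> v is computed in F_q.\<close>
definition code_SL2 :: "nat \<Rightarrow> (nat \<Rightarrow> 'a::field ^ 2 ^ 2) \<Rightarrow> (nat \<Rightarrow> nat) set" where
  "code_SL2 N g = {u. (\<forall>i<N. u i \<in> {0, 1}) \<and> (\<forall>i\<ge>N. u i = 0) \<and>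
                      (\<Sum>i<N. of_nat (u i) * trace (g i)) = 0}"

definition hweight :: "nat \<Rightarrow> (nat \<Rightarrow> nat) \<Rightarrow> nat" where
  "hweight N u = card {i. i < N \<and> u i \<noteq> 0}"

end

theory Submission
  imports Defs "HOL-Computational_Algebra.Polynomial"
begin

lemma char2:
  assumes "CARD('a::{field,finite}) = 2^r" "r > 0"
  shows "(2::'a) = 0"
proof -
  have b: "bij_betw (\<lambda>x::'a. x + 1) UNIV UNIV"
    by (rule bij_betwI[where g="\<lambda>x. x - 1"]) auto
  have "(\<Sum>x\<in>UNIV. x + (1::'a)) = (\<Sum>x\<in>UNIV. x)"
    using sum.reindex_bij_betw[OF b, of id] by simp
  hence "of_nat CARD('a) = (0::'a)" by (simp add: sum.distrib)
  hence "(2::'a) ^ r = 0" using assms by simp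
  thus ?thesis by simp
qed

lemma fermat:
  fixes x :: "'a::{field,finite}"
  shows "x ^ CARD('a) = x"
proof (cases "x = 0")
  case True thus ?thesis by (simp add: power_0_left)
next
  case False
  let ?S = "UNIV - {0::'a}"
  have b: "bij_betw (\<lambda>y. x * y) ?S ?S"
    by (rule bij_betwI[where g="\<lambda>y. y / x"]) (use False in auto)
  have "(\<Prod>y\<in>?S. x * y) = (\<Prod>y\<in>?S. y)"
    using prod.reindex_bij_betw[OF b, of id] by simp
  hence "x ^ card ?S * (\<Prod>y\<in>?S. y) = (\<Prod>y\<in>?S. y)"
    by (simp add: prod.distrib)
  moreover have "(\<Prod>y\<in>?S. y) \<noteq> 0" by simp
  ultimately have "x ^ card ?S = 1" by simp
  moreover have "card ?S = CARD('a) - 1" by (simp add: card_Diff_subset)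
  moreover have "CARD('a) \<ge> 1" by (simp add: Suc_leI)
  ultimately have "x ^ (CARD('a) - 1) = 1" by simp
  moreover have "CARD('a) = Suc (CARD('a) - 1)" using \<open>CARD('a) \<ge> 1\<close> by simp
  ultimately have "x ^ CARD('a) = x ^ Suc (CARD('a) - 1)" by simp
  also have "\<dots> = x * x ^ (CARD('a) - 1)" by (rule power_Suc)
  also have "\<dots> = x" using \<open>x ^ (CARD('a) - 1) = 1\<close> by simp
  finally show ?thesis .
qed


lemma frob2: assumes "(2::'a::field) = 0" shows "(x + y :: 'a) ^ 2 = x ^ 2 + y ^ 2"
proof -
  have "(x+y)^2 = x^2 + y^2 + 2*x*y" by (simp add: power2_eq_square algebra_simps)
  thus ?thesis using assms by simp
qed

lemma frob_pow: assumes "(2::'a::field) = 0" shows "(x + y :: 'a) ^ (2^j) = x ^ (2^j) + y ^ (2^j)"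
proof (induction j)
  case 0 then show ?case by simp
next
  case (Suc j)
  have "(x+y)^(2^Suc j) = ((x+y)^(2^j))^2" by (simp add: power_mult[symmetric] mult.commute)
  also have "\<dots> = (x^(2^j))^2 + (y^(2^j))^2" using Suc frob2[OF assms] by simp
  also have "\<dots> = x^(2^Suc j) + y^(2^Suc j)" by (simp add: power_mult[symmetric] mult.commute)
  finally show ?case .
qed

lemma sum_sq: assumes "(2::'a::field) = 0" "finite A"
  shows "(\<Sum>j\<in>A. f j :: 'a) ^ 2 = (\<Sum>j\<in>A. f j ^ 2)"
  using assms(2) by (induction A rule: finite_induct) (simp_all add: frob2[OF assms(1)])

lemma minus_eq_self: assumes "(2::'a::field) = 0" shows "- (x::'a) = x"
proof -
  have "x + x = 2 * x" by simp
  thus ?thesis using assms by (simp add: add_eq_0_iff2)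
qed

lemma abs_tr_add: assumes "(2::'a::field) = 0"
  shows "abs_tr r (x + y :: 'a) = abs_tr r x + abs_tr r y"
  unfolding abs_tr_def by (simp add: frob_pow[OF assms] sum.distrib)

lemma abs_tr_sq: assumes "(2::'a::field) = 0"
  shows "abs_tr r (x ^ 2 :: 'a) = abs_tr r x ^ 2"
  unfolding abs_tr_def sum_sq[OF assms finite_lessThan]
  by (simp add: power_mult[symmetric] mult.commute)

lemma abs_tr_sq_self:
  assumes "CARD('a::{field,finite}) = 2^r" "r > 0"
  shows "abs_tr r (x::'a) ^ 2 = abs_tr r x"
proof -
  have c2: "(2::'a) = 0" using char2[OF assms] .
  let ?f = "\<lambda>j. x ^ (2^j)"
  have "abs_tr r x ^ 2 = (\<Sum>j<r. ?f (Suc j))"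
    unfolding abs_tr_def sum_sq[OF c2 finite_lessThan]
    by (simp add: power_mult[symmetric] mult.commute)
  also have "\<dots> = (\<Sum>j<r. ?f j) + ?f r - ?f 0"
  proof -
    have e1: "(\<Sum>j<Suc r. ?f j) = ?f 0 + (\<Sum>j<r. ?f (Suc j))" by (rule sum.lessThan_Suc_shift)
    have e2: "(\<Sum>j<Suc r. ?f j) = (\<Sum>j<r. ?f j) + ?f r" by (rule sum.lessThan_Suc)
    show ?thesis using e1 e2 by (simp add: algebra_simps)
  qed
  also have "?f r = x" using fermat[where x=x] assms by simp
  finally show ?thesis by (simp add: abs_tr_def)
qed

lemma abs_tr_01:
  assumes "CARD('a::{field,finite}) = 2^r" "r > 0"
  shows "abs_tr r (x::'a) = 0 \<or> abs_tr r x = 1"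
proof -
  let ?t = "abs_tr r x"
  have "?t * (?t - 1) = 0" using abs_tr_sq_self[OF assms, of x] by (simp add: power2_eq_square algebra_simps)
  thus ?thesis by simp
qed

lemma abs_tr_image:
  assumes "CARD('a::{field,finite}) = 2^r" "r > 0"
  shows "abs_tr r ((y::'a)^2 + y) = 0"
proof -
  have c2: "(2::'a) = 0" using char2[OF assms] .
  have "abs_tr r (y^2 + y) = abs_tr r y + abs_tr r y"
    using abs_tr_add[OF c2] abs_tr_sq[OF c2] abs_tr_sq_self[OF assms] by simp
  also have "\<dots> = 2 * abs_tr r y" by simp
  finally show ?thesis using c2 by simp
qed

lemma card_ker_tr:
  assumes "CARD('a::{field,finite}) = 2^r" "r > 0"
  shows "card {x::'a. abs_tr r x = 0} \<le> 2^(r-1)"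
proof -
  define p :: "'a poly" where "p = (\<Sum>j<r. monom 1 (2^j))"
  have ev: "poly p x = abs_tr r x" for x
    by (simp add: p_def poly_sum poly_monom abs_tr_def)
  have "coeff p (2^(r-1)) = (\<Sum>j<r. if 2^j = (2::nat)^(r-1) then 1 else 0)"
    by (simp add: p_def coeff_sum coeff_monom)
  also have "\<dots> = (\<Sum>j\<in>{r-1}. 1)"
  proof -
    have "(\<Sum>j<r. if 2^j = (2::nat)^(r-1) then 1 else 0) = (\<Sum>j\<in>{j. j<r \<and> 2^j = (2::nat)^(r-1)}. (1::'a))"
      by (simp add: sum.If_cases Collect_conj_eq lessThan_def)
    also have "{j. j<r \<and> 2^j = (2::nat)^(r-1)} = {r-1}" using assms(2) by auto
    finally show ?thesis by simp
  qed
  finally have "coeff p (2^(r-1)) = 1" by simp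
  hence "p \<noteq> 0" by auto
  have "degree p \<le> 2^(r-1)" unfolding p_def
    by (rule degree_sum_le) (use assms(2) in \<open>auto intro: order.trans[OF degree_monom_le]\<close>)
  have "card {x. poly p x = 0} \<le> degree p" by (rule card_poly_roots_bound[OF \<open>p\<noteq>0\<close>])
  thus ?thesis using ev \<open>degree p \<le> _\<close> by simp
qed


lemma quad_fiber:
  assumes c2: "(2::'a::field) = 0" and "y0^2 + y0 = (c::'a)"
  shows "{y. y^2 + y = c} = {y0, y0 + 1}"
proof -
  have m: "-(x::'a) = x" for x using minus_eq_self[OF c2] .
  have "z^2 + z = c \<longleftrightarrow> z = y0 \<or> z = y0 + 1" for z
  proof -
    let ?w = "z + y0"
    have "z^2 + z + (y0^2 + y0) = ?w^2 + ?w" using frob2[OF c2, of z y0] by (simp add: algebra_simps)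
    have eqiff: "a = b \<longleftrightarrow> a + b = 0" for a b :: 'a
      by (metis add_eq_0_iff m)
    have "z^2 + z = c \<longleftrightarrow> ?w^2 + ?w = 0"
      using eqiff[of "z^2+z" c] assms(2) \<open>z^2 + z + (y0^2 + y0) = ?w^2 + ?w\<close> by (simp only:)
    also have "\<dots> \<longleftrightarrow> ?w * (?w + 1) = 0" by (simp add: power2_eq_square algebra_simps)
    also have "\<dots> \<longleftrightarrow> ?w = 0 \<or> ?w + 1 = 0" by simp
    also have "\<dots> \<longleftrightarrow> z = y0 \<or> z = y0 + 1"
      using eqiff[of z y0] eqiff[of z "y0+1"] by (simp add: algebra_simps)
    finally show ?thesis .
  qed
  thus ?thesis by auto
qed

lemma quad_card_fiber:
  assumes c2: "(2::'a::field) = 0" and "y0^2 + y0 = (c::'a)"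
  shows "card {y. y^2 + y = c} = 2"
proof -
  have "y0 \<noteq> y0 + 1" by simp
  thus ?thesis using quad_fiber[OF assms] by simp
qed

lemma quad_count:
  assumes "CARD('a::{field,finite}) = 2^r" "r > 0"
  shows "card {y::'a. y^2 + y = c} = (if abs_tr r c = 0 then 2 else 0)"
proof -
  have c2: "(2::'a) = 0" using char2[OF assms] .
  define f where "f = (\<lambda>y::'a. y^2 + y)"
  define K where "K = {x::'a. abs_tr r x = 0}"
  have sub: "range f \<subseteq> K" unfolding f_def K_def using abs_tr_image[OF assms] by auto
  have U: "(UNIV::'a set) = (\<Union>c\<in>range f. {y. f y = c})" by auto
  have "CARD('a) = (\<Sum>c\<in>range f. card {y. f y = c})"
    by (subst U, rule card_UN_disjoint) auto
  also have "\<dots> = (\<Sum>c\<in>range f. 2)"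
    by (rule sum.cong) (auto simp: f_def intro: quad_card_fiber[OF c2])
  finally have "2^r = card (range f) * 2" using assms by simp
  hence cr: "card (range f) = 2^(r-1)" using assms(2)
    by (metis (no_types, lifting) Suc_diff_1 mult.commute mult_cancel_left power_Suc zero_neq_numeral)
  have "card K \<le> card (range f)" using card_ker_tr[OF assms] cr K_def by simp
  hence KR: "range f = K" by (intro card_seteq) (use sub in auto)
  show ?thesis
  proof (cases "abs_tr r c = 0")
    case True
    then obtain y0 where "f y0 = c" using KR K_def by (metis (mono_tags, lifting) mem_Collect_eq rangeE)
    thus ?thesis using True quad_card_fiber[OF c2, of y0 c] by (simp add: f_def)
  next
    case False
    hence "{y. y^2 + y = c} = {}" using sub K_def f_def by auto
    thus ?thesis using False by simp
  qed
qed


lemma card_prod_eq: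
  fixes m :: "'a::{field,finite}"
  shows "card {(b,c). b * c = m} = (if m = 0 then 2 * CARD('a) - 1 else CARD('a) - 1)"
proof (cases "m = 0")
  case True
  have "{(b,c). b * c = m} = ({0::'a} \<times> (UNIV::'a set)) \<union> ((UNIV::'a set) \<times> {0::'a})" using True by auto
  moreover have "card (({0::'a} \<times> (UNIV::'a set)) \<union> ((UNIV::'a set) \<times> {0::'a})) = CARD('a) + CARD('a) - 1"
  proof -
    have i: "card (({0::'a} \<times> (UNIV::'a set)) \<inter> ((UNIV::'a set) \<times> {0::'a})) = 1"
    proof -
      have "({0::'a} \<times> (UNIV::'a set)) \<inter> ((UNIV::'a set) \<times> {0::'a}) = {(0,0)}" by auto
      thus ?thesis by simp
    qed
    have u: "card (({0::'a} \<times> (UNIV::'a set)) \<union> ((UNIV::'a set) \<times> {0::'a})) + card (({0::'a} \<times> (UNIV::'a set)) \<inter> ((UNIV::'a set) \<times> {0::'a})) = CARD('a) + CARD('a)"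
      using card_Un_Int[of "{0::'a} \<times> (UNIV::'a set)" "(UNIV::'a set) \<times> {0::'a}"] by (simp add: card_cartesian_product)
    from u i have "card (({0::'a} \<times> (UNIV::'a set)) \<union> ((UNIV::'a set) \<times> {0::'a})) + 1 = CARD('a) + CARD('a)" by simp
    thus ?thesis by simp
  qed
  ultimately show ?thesis using True by simp
next
  case False
  have "bij_betw (\<lambda>b. (b, m / b)) (UNIV - {0}) {(b,c). b * c = m}"
    by (rule bij_betwI[where g=fst]) (use False in auto)
  hence "card {(b,c). b * c = m} = card (UNIV - {0::'a})" by (simp add: bij_betw_same_card)
  thus ?thesis using False by (simp add: card_Diff_subset)
qed

lemma sl2_to_triples:
  fixes \<beta> :: "'a::{field,finite}"
  shows "card {A::'a^2^2. A \<in> SL2 \<and> trace A = \<beta>} = card {(a,b,c). a * (\<beta> - a) - b * c = (1::'a)}"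
proof -
  define \<phi> where "\<phi> = (\<lambda>A::'a^2^2. (A$1$1, A$1$2, A$2$1))"
  define \<psi> where "\<psi> = (\<lambda>(a,b,c). (\<chi> i j. if i = 1 then (if j = 1 then a else b) else (if j = 1 then c else \<beta> - a)) :: 'a^2^2)"
  have tr: "trace A = A$1$1 + A$2$2" for A :: "'a^2^2" by (simp add: trace_def sum_2)
  have "bij_betw \<phi> {A::'a^2^2. A \<in> SL2 \<and> trace A = \<beta>} {(a,b,c). a * (\<beta> - a) - b * c = (1::'a)}"
  proof (rule bij_betw_byWitness[where f'=\<psi>])
    show "\<forall>A\<in>{A::'a^2^2. A \<in> SL2 \<and> trace A = \<beta>}. \<psi> (\<phi> A) = A"
    proof
      fix A :: "'a^2^2" assume "A \<in> {A. A \<in> SL2 \<and> trace A = \<beta>}"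
      hence "A$2$2 = \<beta> - A$1$1" using tr[of A] by (simp add: algebra_simps)
      thus "\<psi> (\<phi> A) = A" unfolding \<psi>_def \<phi>_def
        by (simp add: vec_eq_iff forall_2)
    qed
    show "\<forall>t\<in>{(a,b,c). a * (\<beta> - a) - b * c = (1::'a)}. \<phi> (\<psi> t) = t"
      by (auto simp: \<phi>_def \<psi>_def)
    show "\<phi> ` {A::'a^2^2. A \<in> SL2 \<and> trace A = \<beta>} \<subseteq> {(a,b,c). a * (\<beta> - a) - b * c = (1::'a)}"
    proof
      fix t assume "t \<in> \<phi> ` {A::'a^2^2. A \<in> SL2 \<and> trace A = \<beta>}"
      then obtain A :: "'a^2^2" where A: "det A = 1" "trace A = \<beta>" "t = \<phi> A" by (auto simp: SL2_def)
      hence "A$2$2 = \<beta> - A$1$1" using tr[of A] by (simp add: algebra_simps)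
      thus "t \<in> {(a,b,c). a * (\<beta> - a) - b * c = (1::'a)}" using A by (simp add: \<phi>_def det_2)
    qed
    show "\<psi> ` {(a,b,c). a * (\<beta> - a) - b * c = (1::'a)} \<subseteq> {A::'a^2^2. A \<in> SL2 \<and> trace A = \<beta>}"
      by (auto simp: \<psi>_def SL2_def det_2 tr)
  qed
  thus ?thesis by (rule bij_betw_same_card)
qed


lemma triples_sum:
  fixes \<beta> :: "'a::{field,finite}"
  shows "card {(a,b,c). a * (\<beta> - a) - b * c = (1::'a)} =
    CARD('a) * (CARD('a) - 1) + CARD('a) * card {a. a * (\<beta> - a) = 1}"
proof -
  let ?q = "CARD('a)"
  have "{(a,b,c). a * (\<beta> - a) - b * c = (1::'a)} = Sigma UNIV (\<lambda>a. {(b,c). b * c = a * (\<beta> - a) - 1})"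
    by (auto simp: algebra_simps)
  hence "card {(a,b,c). a * (\<beta> - a) - b * c = (1::'a)} = (\<Sum>a\<in>UNIV. card {(b,c). b * c = a * (\<beta> - a) - (1::'a)})"
    by simp
  also have "\<dots> = (\<Sum>a\<in>UNIV. (?q - 1) + (if a * (\<beta> - a) = 1 then ?q else 0))"
  proof (rule sum.cong)
    fix a show "card {(b,c). b * c = a * (\<beta> - a) - (1::'a)} = (?q - 1) + (if a * (\<beta> - a) = 1 then ?q else 0)"
      using card_prod_eq[of "a * (\<beta> - a) - 1"] finite_UNIV_card_ge_0[where 'a='a] by auto
  qed simp
  also have "\<dots> = ?q * (?q - 1) + (\<Sum>a\<in>UNIV. if a * (\<beta> - a) = 1 then ?q else 0)"
    by (simp only: sum.distrib sum_constant of_nat_id)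
  also have "(\<Sum>a\<in>UNIV. if a * (\<beta> - a) = 1 then ?q else 0) = (\<Sum>a\<in>{a. a * (\<beta> - a) = 1}. ?q)"
    using sum.inter_filter[of UNIV "\<lambda>_. ?q" "\<lambda>a. a * (\<beta> - a) = 1"] by simp
  finally show ?thesis by simp
qed

lemma roots_count:
  assumes "CARD('a::{field,finite}) = 2^r" "r > 0"
  shows "card {a::'a. a * (\<beta> - a) = 1} = (if \<beta> = 0 then 1 else if abs_tr r (inverse \<beta>) = 0 then 2 else 0)"
proof -
  have c2: "(2::'a) = 0" using char2[OF assms] .
  have m: "-(x::'a) = x" for x using minus_eq_self[OF c2] .
  show ?thesis
  proof (cases "\<beta> = 0")
    case True
    have "a * (\<beta> - a) = 1 \<longleftrightarrow> a = 1" for a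
    proof -
      have "a * (\<beta> - a) = -(a*a)" using True by simp
      also have "\<dots> = a^2" using m[of "a*a"] by (simp only: power2_eq_square)
      finally have "a * (\<beta> - a) = 1 \<longleftrightarrow> a^2 = 1" by simp
      also have "\<dots> \<longleftrightarrow> a = 1 \<or> a = -1" by (rule power2_eq_1_iff)
      finally show ?thesis using m[of 1] by simp
    qed
    hence "{a::'a. a * (\<beta> - a) = 1} = {1}" by auto
    thus ?thesis using True by simp
  next
    case False
    have "bij_betw (\<lambda>y. \<beta> * y) {y. y^2 + y = inverse \<beta> ^ 2} {a::'a. a * (\<beta> - a) = 1}"
    proof (rule bij_betwI[where g="\<lambda>a. a / \<beta>"])
      have key: "(\<beta> * y) * (\<beta> - \<beta> * y) = \<beta>^2 * (y^2 + y)" for y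
        using m[of "\<beta>^2 * y^2"] by (simp add: power2_eq_square algebra_simps)
      have iff: "(\<beta> * y) * (\<beta> - \<beta> * y) = 1 \<longleftrightarrow> y^2 + y = inverse \<beta> ^ 2" for y
        unfolding key using False by (auto simp: field_simps power2_eq_square)
      show "(\<lambda>y. \<beta> * y) \<in> {y. y^2 + y = inverse \<beta> ^ 2} \<rightarrow> {a. a * (\<beta> - a) = 1}"
        using iff by auto
      show "(\<lambda>a. a / \<beta>) \<in> {a. a * (\<beta> - a) = 1} \<rightarrow> {y. y^2 + y = inverse \<beta> ^ 2}"
      proof
        fix a assume "a \<in> {a::'a. a * (\<beta> - a) = 1}"
        moreover have "a = \<beta> * (a / \<beta>)" using False by simp
        ultimately show "a / \<beta> \<in> {y. y^2 + y = inverse \<beta> ^ 2}" using iff[of "a/\<beta>"] by simp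
      qed
    qed (use False in auto)
    hence "card {a::'a. a * (\<beta> - a) = 1} = card {y. y^2 + y = inverse \<beta> ^ 2}"
      by (simp add: bij_betw_same_card)
    also have "\<dots> = (if abs_tr r (inverse \<beta> ^ 2) = 0 then 2 else 0)" by (rule quad_count[OF assms])
    also have "abs_tr r (inverse \<beta> ^ 2) = abs_tr r (inverse \<beta>)"
      using abs_tr_sq[OF c2] abs_tr_sq_self[OF assms] by simp
    finally show ?thesis using False by simp
  qed
qed

lemma sl2_count:
  assumes "CARD('a::{field,finite}) = 2^r" "r > 0"
  shows "card {A::'a^2^2. A \<in> SL2 \<and> trace A = \<beta>} =
    (if \<beta> = 0 then CARD('a)^2 else if abs_tr r (inverse \<beta>) = 0 then CARD('a)^2 + CARD('a) else CARD('a)^2 - CARD('a))"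
proof -
  let ?q = "CARD('a)"
  have q: "?q \<ge> 1" by (simp add: Suc_leI)
  have e: "?q * (?q - 1) = ?q^2 - ?q" by (simp add: power2_eq_square diff_mult_distrib2)
  have "card {A::'a^2^2. A \<in> SL2 \<and> trace A = \<beta>} = ?q * (?q - 1) + ?q * card {a. a * (\<beta> - a) = 1}"
    by (simp add: sl2_to_triples triples_sum)
  also have "\<dots> = ?q^2 - ?q + ?q * (if \<beta> = 0 then 1 else if abs_tr r (inverse \<beta>) = 0 then 2 else 0)"
    using roots_count[OF assms, of \<beta>] e by simp
  also have "\<dots> = (if \<beta> = 0 then ?q^2 else if abs_tr r (inverse \<beta>) = 0 then ?q^2 + ?q else ?q^2 - ?q)"
    using q by (auto simp: power2_eq_square)
  finally show ?thesis .
qed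


lemma subsets_by_parts:
  fixes T :: "'b::finite \<Rightarrow> nat set" and \<nu> :: "'b \<Rightarrow> nat"
  assumes disj: "\<And>b b'. b \<noteq> b' \<Longrightarrow> T b \<inter> T b' = {}" and fin: "\<And>b. finite (T b)"
    and X: "X = (\<Union>b. T b)"
  shows "card {S. S \<subseteq> X \<and> (\<lambda>b. card (S \<inter> T b)) = \<nu>} = (\<Prod>b\<in>UNIV. card (T b) choose \<nu> b)"
proof -
  define P where "P = PiE UNIV (\<lambda>b. {A. A \<subseteq> T b \<and> card A = \<nu> b})"
  have "bij_betw (\<lambda>S b. S \<inter> T b) {S. S \<subseteq> X \<and> (\<lambda>b. card (S \<inter> T b)) = \<nu>} P"
  proof (rule bij_betw_byWitness[where f'="\<lambda>h. \<Union>b. h b"])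
    show "\<forall>S\<in>{S. S \<subseteq> X \<and> (\<lambda>b. card (S \<inter> T b)) = \<nu>}. (\<Union>b. S \<inter> T b) = S"
      using X by auto
    show "\<forall>h\<in>P. (\<lambda>b. (\<Union>b'. h b') \<inter> T b) = h"
    proof
      fix h assume h: "h \<in> P"
      hence sub: "h b \<subseteq> T b" for b by (auto simp: P_def PiE_UNIV_domain)
      show "(\<lambda>b. (\<Union>b'. h b') \<inter> T b) = h"
      proof
        fix b
        have "(\<Union>b'. h b') \<inter> T b = (\<Union>b'. h b' \<inter> T b)" by auto
        also have "\<dots> = h b"
        proof
          show "(\<Union>b'. h b' \<inter> T b) \<subseteq> h b"
          proof
            fix x assume "x \<in> (\<Union>b'. h b' \<inter> T b)"
            then obtain b' where "x \<in> h b'" "x \<in> T b" by auto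
            moreover have "x \<in> T b'" using sub \<open>x \<in> h b'\<close> by auto
            ultimately show "x \<in> h b" using disj[of b b'] by (cases "b = b'") auto
          qed
          show "h b \<subseteq> (\<Union>b'. h b' \<inter> T b)" using sub by auto
        qed
        finally show "(\<Union>b'. h b') \<inter> T b = h b" .
      qed
    qed
    show "(\<lambda>S b. S \<inter> T b) ` {S. S \<subseteq> X \<and> (\<lambda>b. card (S \<inter> T b)) = \<nu>} \<subseteq> P"
      by (auto simp: P_def PiE_UNIV_domain)
    show "(\<lambda>h. \<Union>b. h b) ` P \<subseteq> {S. S \<subseteq> X \<and> (\<lambda>b. card (S \<inter> T b)) = \<nu>}"
    proof
      fix S assume "S \<in> (\<lambda>h. \<Union>b. h b) ` P"
      then obtain h where h: "h \<in> P" "S = (\<Union>b. h b)" by auto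
      hence sub: "h b \<subseteq> T b" and cd: "card (h b) = \<nu> b" for b by (auto simp: P_def PiE_UNIV_domain)
      have "S \<inter> T b = h b" for b
      proof
        show "S \<inter> T b \<subseteq> h b"
        proof
          fix x assume "x \<in> S \<inter> T b"
          then obtain b' where "x \<in> h b'" "x \<in> T b" using h by auto
          moreover have "x \<in> T b'" using sub \<open>x \<in> h b'\<close> by auto
          ultimately show "x \<in> h b" using disj[of b b'] by (cases "b = b'") auto
        qed
        show "h b \<subseteq> S \<inter> T b" using sub h by auto
      qed
      moreover have "S \<subseteq> X" using h sub X by auto
      ultimately show "S \<in> {S. S \<subseteq> X \<and> (\<lambda>b. card (S \<inter> T b)) = \<nu>}" using cd by auto
    qed
  qed
  hence "card {S. S \<subseteq> X \<and> (\<lambda>b. card (S \<inter> T b)) = \<nu>} = card P" by (rule bij_betw_same_card)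
  also have "\<dots> = (\<Prod>b\<in>UNIV. card {A. A \<subseteq> T b \<and> card A = \<nu> b})" unfolding P_def by (simp add: card_PiE)
  also have "\<dots> = (\<Prod>b\<in>UNIV. card (T b) choose \<nu> b)" using fin by (simp add: n_subsets)
  finally show ?thesis .
qed


lemma code_to_subsets:
  fixes g :: "nat \<Rightarrow> 'a::field ^ 2 ^ 2"
  shows "card {u \<in> code_SL2 N g. hweight N u = i} =
         card {S. S \<subseteq> {..<N} \<and> card S = i \<and> (\<Sum>k\<in>S. trace (g k)) = 0}"
proof -
  define ind where "ind = (\<lambda>(S::nat set) (k::nat). if k \<in> S then 1 else (0::nat))"
  have sumeq: "(\<Sum>k<N. of_nat (ind S k) * trace (g k)) = (\<Sum>k\<in>S. trace (g k))" if "S \<subseteq> {..<N}" for S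
  proof -
    have "(\<Sum>k<N. of_nat (ind S k) * trace (g k)) = (\<Sum>k<N. if k \<in> S then trace (g k) else 0)"
      by (rule sum.cong) (auto simp: ind_def)
    also have "\<dots> = (\<Sum>k\<in>{k\<in>{..<N}. k \<in> S}. trace (g k))" using sum.inter_filter[of "{..<N}" "\<lambda>k. trace (g k)" "\<lambda>k. k \<in> S"] by simp
    also have "{k\<in>{..<N}. k \<in> S} = S" using that by auto
    finally show ?thesis .
  qed
  have hw: "hweight N (ind S) = card S" if "S \<subseteq> {..<N}" for S
  proof -
    have "{k. k < N \<and> ind S k \<noteq> 0} = S" using that by (auto simp: ind_def)
    thus ?thesis by (simp add: hweight_def)
  qed
  have "bij_betw ind {S. S \<subseteq> {..<N} \<and> card S = i \<and> (\<Sum>k\<in>S. trace (g k)) = 0} {u \<in> code_SL2 N g. hweight N u = i}"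
  proof (rule bij_betw_byWitness[where f'="\<lambda>u. {k. k < N \<and> u k \<noteq> 0}"])
    show "\<forall>S\<in>{S. S \<subseteq> {..<N} \<and> card S = i \<and> (\<Sum>k\<in>S. trace (g k)) = 0}. {k. k < N \<and> ind S k \<noteq> 0} = S"
      by (auto simp: ind_def)
    show "\<forall>u\<in>{u \<in> code_SL2 N g. hweight N u = i}. ind {k. k < N \<and> u k \<noteq> 0} = u"
    proof
      fix u assume "u \<in> {u \<in> code_SL2 N g. hweight N u = i}"
      hence u1: "\<forall>k<N. u k \<in> {0,1}" and u2: "\<forall>k\<ge>N. u k = 0" by (auto simp: code_SL2_def)
      show "ind {k. k < N \<and> u k \<noteq> 0} = u"
      proof
        fix k show "ind {k. k < N \<and> u k \<noteq> 0} k = u k"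
          using u1 u2 by (cases "k < N") (auto simp: ind_def)
      qed
    qed
    show "ind ` {S. S \<subseteq> {..<N} \<and> card S = i \<and> (\<Sum>k\<in>S. trace (g k)) = 0} \<subseteq> {u \<in> code_SL2 N g. hweight N u = i}"
    proof
      fix u assume "u \<in> ind ` {S. S \<subseteq> {..<N} \<and> card S = i \<and> (\<Sum>k\<in>S. trace (g k)) = 0}"
      then obtain S where S: "S \<subseteq> {..<N}" "card S = i" "(\<Sum>k\<in>S. trace (g k)) = 0" "u = ind S" by auto
      show "u \<in> {u \<in> code_SL2 N g. hweight N u = i}"
        using S sumeq[OF S(1)] hw[OF S(1)] by (auto simp: code_SL2_def ind_def)
    qed
    show "(\<lambda>u. {k. k < N \<and> u k \<noteq> 0}) ` {u \<in> code_SL2 N g. hweight N u = i} \<subseteq> {S. S \<subseteq> {..<N} \<and> card S = i \<and> (\<Sum>k\<in>S. trace (g k)) = 0}"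
    proof
      fix S assume "S \<in> (\<lambda>u. {k. k < N \<and> u k \<noteq> 0}) ` {u \<in> code_SL2 N g. hweight N u = i}"
      then obtain u where u: "u \<in> code_SL2 N g" "hweight N u = i" "S = {k. k < N \<and> u k \<noteq> 0}" by auto
      hence u1: "\<forall>k<N. u k \<in> {0,1}" and u2: "\<forall>k\<ge>N. u k = 0" by (auto simp: code_SL2_def)
      have "ind S = u"
      proof
        fix k show "ind S k = u k" using u1 u2 u(3) by (cases "k < N") (auto simp: ind_def)
      qed
      have sub: "S \<subseteq> {..<N}" using u by auto
      show "S \<in> {S. S \<subseteq> {..<N} \<and> card S = i \<and> (\<Sum>k\<in>S. trace (g k)) = 0}"
        using sub u sumeq[OF sub] \<open>ind S = u\<close> by (auto simp: code_SL2_def hweight_def)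
    qed
  qed
  thus ?thesis by (simp add: bij_betw_same_card)
qed


theorem corollary18:
  fixes r :: nat and N :: nat and g :: "nat \<Rightarrow> 'a::{field,finite} ^ 2 ^ 2" and i :: nat
  assumes "r > 0"
    and "CARD('a) = 2 ^ r"
    and "N = CARD('a) * (CARD('a) ^ 2 - 1)"
    and "bij_betw g {..<N} (SL2 :: ('a ^ 2 ^ 2) set)"
    and "i \<le> N"
  shows "card {u \<in> code_SL2 N g. hweight N u = i} =
    (\<Sum>\<nu> \<in> {\<nu> :: 'a \<Rightarrow> nat. (\<Sum>\<beta>\<in>UNIV. \<nu> \<beta>) = i \<and> (\<Sum>\<beta>\<in>UNIV. of_nat (\<nu> \<beta>) * \<beta>) = 0}.
       ((CARD('a) ^ 2) choose (\<nu> 0))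
       * (\<Prod>\<beta> \<in> {\<beta>. \<beta> \<noteq> 0 \<and> abs_tr r (inverse \<beta>) = 0}. (CARD('a) ^ 2 + CARD('a)) choose (\<nu> \<beta>))
       * (\<Prod>\<beta> \<in> {\<beta>. \<beta> \<noteq> 0 \<and> abs_tr r (inverse \<beta>) = 1}. (CARD('a) ^ 2 - CARD('a)) choose (\<nu> \<beta>)))"
proof -
  let ?q = "CARD('a)"
  define V where "V = {\<nu> :: 'a \<Rightarrow> nat. (\<Sum>\<beta>\<in>UNIV. \<nu> \<beta>) = i \<and> (\<Sum>\<beta>\<in>UNIV. of_nat (\<nu> \<beta>) * \<beta>) = 0}"
  define T where "T = (\<lambda>\<beta>::'a. {k. k < N \<and> trace (g k) = \<beta>})"
  define cnt where "cnt = (\<lambda>S::nat set. \<lambda>\<beta>. card (S \<inter> T \<beta>))"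
  have disj: "\<And>b b'. b \<noteq> b' \<Longrightarrow> T b \<inter> T b' = {}" by (auto simp: T_def)
  have finT: "\<And>b. finite (T b)" by (auto simp: T_def)
  have X: "{..<N} = (\<Union>b. T b)" by (auto simp: T_def)
  have split: "S = (\<Union>\<beta>. S \<inter> T \<beta>)" if "S \<subseteq> {..<N}" for S using that X by auto
  have cardS: "card S = (\<Sum>\<beta>\<in>UNIV. cnt S \<beta>)" if "S \<subseteq> {..<N}" for S
  proof -
    have "card S = card (\<Union>\<beta>. S \<inter> T \<beta>)" using split[OF that] by simp
    also have "\<dots> = (\<Sum>\<beta>\<in>UNIV. card (S \<inter> T \<beta>))"
      by (rule card_UN_disjoint) (use finT disj in auto)
    finally show ?thesis by (simp add: cnt_def)
  qed
  have sumS: "(\<Sum>k\<in>S. trace (g k)) = (\<Sum>\<beta>\<in>UNIV. of_nat (cnt S \<beta>) * \<beta>)" if "S \<subseteq> {..<N}" for S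
  proof -
    have "(\<Sum>k\<in>S. trace (g k)) = (\<Sum>k\<in>(\<Union>\<beta>. S \<inter> T \<beta>). trace (g k))" using split[OF that] by simp
    also have "\<dots> = (\<Sum>\<beta>\<in>UNIV. \<Sum>k\<in>S \<inter> T \<beta>. trace (g k))"
      by (rule sum.UNION_disjoint) (use finT disj in auto)
    also have "\<dots> = (\<Sum>\<beta>\<in>UNIV. \<Sum>k\<in>S \<inter> T \<beta>. \<beta>)"
      by (intro sum.cong refl) (auto simp: T_def)
    finally show ?thesis by (simp add: cnt_def)
  qed
  have finV: "finite V"
  proof (rule finite_subset)
    show "V \<subseteq> PiE UNIV (\<lambda>_. {..i})"
    proof
      fix \<nu> assume "\<nu> \<in> V"
      hence "\<nu> \<beta> \<le> i" for \<beta> unfolding V_def using member_le_sum[of \<beta> UNIV \<nu>] by auto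
      thus "\<nu> \<in> PiE UNIV (\<lambda>_. {..i})" by (auto simp: PiE_UNIV_domain)
    qed
  qed (simp add: finite_PiE)
  define F where "F = (\<lambda>\<nu>. {S. S \<subseteq> {..<N} \<and> cnt S = \<nu>})"
  have "card {u \<in> code_SL2 N g. hweight N u = i} =
         card {S. S \<subseteq> {..<N} \<and> card S = i \<and> (\<Sum>k\<in>S. trace (g k)) = 0}"
    by (rule code_to_subsets)
  also have "{S. S \<subseteq> {..<N} \<and> card S = i \<and> (\<Sum>k\<in>S. trace (g k)) = 0} = (\<Union>\<nu>\<in>V. F \<nu>)"
    using cardS sumS by (auto simp: V_def F_def)
  also have "card (\<Union>\<nu>\<in>V. F \<nu>) = (\<Sum>\<nu>\<in>V. card (F \<nu>))"
    by (rule card_UN_disjoint) (use finV in \<open>auto simp: F_def intro: finite_subset[of _ "Pow {..<N}"]\<close>)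
  also have "\<dots> = (\<Sum>\<nu>\<in>V. \<Prod>\<beta>\<in>UNIV. card (T \<beta>) choose \<nu> \<beta>)"
    by (intro sum.cong refl) (simp add: F_def cnt_def subsets_by_parts[OF disj finT X])
  also have "\<dots> = (\<Sum>\<nu>\<in>V. ((?q ^ 2) choose (\<nu> 0))
       * (\<Prod>\<beta> \<in> {\<beta>. \<beta> \<noteq> 0 \<and> abs_tr r (inverse \<beta>) = 0}. (?q ^ 2 + ?q) choose (\<nu> \<beta>))
       * (\<Prod>\<beta> \<in> {\<beta>. \<beta> \<noteq> 0 \<and> abs_tr r (inverse \<beta>) = 1}. (?q ^ 2 - ?q) choose (\<nu> \<beta>)))"
  proof (rule sum.cong[OF refl])
    fix \<nu> :: "'a \<Rightarrow> nat"
    have cT: "card (T \<beta>) = card {A::'a^2^2. A \<in> SL2 \<and> trace A = \<beta>}" for \<beta>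
    proof -
      have "g ` T \<beta> = {A. A \<in> SL2 \<and> trace A = \<beta>}"
        using assms(4) by (auto simp: T_def bij_betw_def)
      moreover have "inj_on g (T \<beta>)" using assms(4) by (auto simp: T_def bij_betw_def intro: inj_on_subset)
      ultimately show ?thesis by (metis card_image)
    qed
    define Z0 where "Z0 = {\<beta>::'a. \<beta> \<noteq> 0 \<and> abs_tr r (inverse \<beta>) = 0}"
    define Z1 where "Z1 = {\<beta>::'a. \<beta> \<noteq> 0 \<and> abs_tr r (inverse \<beta>) = 1}"
    have U: "(UNIV::'a set) = insert 0 (Z0 \<union> Z1)"
      using abs_tr_01[OF assms(2,1)] by (auto simp: Z0_def Z1_def)
    let ?h = "\<lambda>\<beta>. card (T \<beta>) choose \<nu> \<beta>"
    have "(\<Prod>\<beta>\<in>UNIV. ?h \<beta>) = ?h 0 * ((\<Prod>\<beta>\<in>Z0. ?h \<beta>) * (\<Prod>\<beta>\<in>Z1. ?h \<beta>))"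
    proof -
      have "Z0 \<inter> Z1 = {}" by (auto simp: Z0_def Z1_def)
      moreover have "0 \<notin> Z0 \<union> Z1" by (auto simp: Z0_def Z1_def)
      ultimately show ?thesis by (subst U) (simp add: prod.union_disjoint)
    qed
    also have "?h 0 = (?q ^ 2) choose (\<nu> 0)" using cT sl2_count[OF assms(2,1)] by simp
    also have "(\<Prod>\<beta>\<in>Z0. ?h \<beta>) = (\<Prod>\<beta>\<in>Z0. (?q ^ 2 + ?q) choose (\<nu> \<beta>))"
      by (rule prod.cong) (auto simp: Z0_def cT sl2_count[OF assms(2,1)])
    also have "(\<Prod>\<beta>\<in>Z1. ?h \<beta>) = (\<Prod>\<beta>\<in>Z1. (?q ^ 2 - ?q) choose (\<nu> \<beta>))"
      by (rule prod.cong) (auto simp: Z1_def cT sl2_count[OF assms(2,1)])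
    finally show "(\<Prod>\<beta>\<in>UNIV. ?h \<beta>) = ((?q ^ 2) choose (\<nu> 0))
       * (\<Prod>\<beta> \<in> {\<beta>. \<beta> \<noteq> 0 \<and> abs_tr r (inverse \<beta>) = 0}. (?q ^ 2 + ?q) choose (\<nu> \<beta>))
       * (\<Prod>\<beta> \<in> {\<beta>. \<beta> \<noteq> 0 \<and> abs_tr r (inverse \<beta>) = 1}. (?q ^ 2 - ?q) choose (\<nu> \<beta>))"
      by (simp add: Z0_def Z1_def mult.assoc)
  qed
  finally show ?thesis by (simp add: V_def)
qed

end
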